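(* Consider DEAREST (described in the context) run with any stepsize $\eta>0$ and any other parameters, and assume the individual functions are $L$-average smooth and $W$ satisfies the gossip assumption (both in the context). Then for every $t$, $$f(\bar x_{t+1})\le f(\bar x_t)-\frac{\eta}{2}\|\nabla f(\bar x_t)\|^2+\eta U_t+\frac{L^2\eta}{m}C_t-\Big(\frac{1}{2\eta}-\frac L2\Big)\|\bar x_{t+1}-\bar x_t\|^2,$$ where $U_t=\big\|\frac1m\sum_{i=1}^m(\mathbf{g}_t(i)-\nabla f_i(\mathbf{x}_t(i)))\big\|^2$ and $C_t=\|\mathbf{x}_t-\mathbf{1}\bar x_t\|^2+\eta^2\|\mathbf{s}_t-\mathbf{1}\bar s_t\|^2$.
   Context: Let $f_{i,j}:\mathbb{R}^d\to\mathbb{R}$ ($i\le m$, $j\le n$) be differentiable, $f_i=\frac1n\sum_j f_{i,j}$, $f=\frac1m\sum_i f_i$. $L$-average smoothness: for some $L>0$ and every $i$, $\frac1n\sum_{j=1}^n\|\nabla f_{i,j}(x)-\nabla f_{i,j}(x')\|^2\le L^2\|x-x'\|^2$ for all $x,x'$. Gossip assumption: $W\in\mathbb{R}^{m\times m}$ symmetric, $w_{ij}=0$ if agents $i,j$ are not connected, $W\mathbf{1}=\mathbf{1}$; $\lambda_2(W)$ its second-largest eigenvalue. $\|\cdot\|$ is the Frobenius/Euclidean norm. For $\mathbf{x}\in\mathbb{R}^{m\times d}$ with rows $\mathbf{x}(i)^\top$, $\bar x=\frac1m\mathbf{1}^\top\mathbf{x}$; $\nabla\mathbf{f}(\mathbf{x})$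 has rows $\nabla f_i(\mathbf{x}(i))^\top$. FastMix$(\mathbf{u}^{(0)},K)$: $\mathbf{u}^{(-1)}=\mathbf{u}^{(0)}$, $\eta_u=\frac{1-\sqrt{1-\lambda_2^2(W)}}{1+\sqrt{1-\lambda_2^2(W)}}$; for $k=0,\dots,K$: $\mathbf{u}^{(k+1)}=(1+\eta_u)W\mathbf{u}^{(k)}-\eta_u\mathbf{u}^{(k-1)}$; output $\mathbf{u}^{(K)}$. DEAREST (parameters $\bar x_0,\eta,p,b,K_{\rm in},K,\hat K,T$): $\mathbf{x}_0=\mathbf{1}\bar x_0^\top$, $\mathbf{g}_0=\nabla\mathbf{f}(\mathbf{x}_0)$, $\mathbf{s}_0=$FastMix$(\mathbf{g}_0,K_{\rm in})$. For $t=0,\dots,T-1$: $y_t\sim$Bernoulli$(p)$ shared by all agents; $K_t=K$ if $y_t=1$, else $\hat K$; $\mathbf{x}_{t+1}=$FastMix$(\mathbf{x}_t-\eta\mathbf{s}_t,K_t)$; for each $i$, $\mathbf{g}_{t+1}(i)=\nabla f_i(\mathbf{x}_{t+1}(i))$ if $y_t=1$, else $\mathbf{g}_t(i)+\frac1b\sum_{j=1}^b(\nabla f_{i,\xi_j}(\mathbf{x}_{t+1}(i))-\nabla f_{i,\xi_j}(\mathbf{x}_t(i)))$ with $\xi_j$ i.i.d. uniform on $\{1,\dots,n\}$; $\mathbf{s}_{t+1}=$FastMix$(\mathbf{s}_t+\mathbf{g}_{t+1}-\mathbf{g}_t,K_t)$. *)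

theory Defs
  imports "HOL-Analysis.Analysis" "HOL-Computational_Algebra.Polynomial"
begin

definition grad :: "('v::real_inner \<Rightarrow> real) \<Rightarrow> 'v \<Rightarrow> 'v" where
  "grad f x = (THE D. GDERIV f x :> D)"

text \<open>Eigenvalues (with multiplicity) of a real square matrix: the multiset of real roots of
  its characteristic polynomial det(X I - W); lambda_2 is the second-largest one.\<close>
definition char_poly_mat :: "real^'m^'m \<Rightarrow> real poly" where
  "char_poly_mat W = det (\<chi> i j. (if i = j then [:0, 1:] else 0) - [:W $ i $ j:])"

definition eigenvalues_desc :: "real^'m^'m \<Rightarrow> real list" where
  "eigenvalues_desc W = rev (sorted_list_of_multiset (proots (char_poly_mat W)))"

definition lambda2 :: "real^'m^'m \<Rightarrow> real" where
  "lambda2 W = eigenvalues_desc W ! 1"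

definition eta_u :: "real^'m^'m \<Rightarrow> real" where
  "eta_u W = (1 - sqrt (1 - (lambda2 W)\<^sup>2)) / (1 + sqrt (1 - (lambda2 W)\<^sup>2))"

text \<open>FastMix: pairs (u^(k-1), u^(k)); u^(-1) = u^(0).\<close>
fun fastmix_seq :: "real^'m^'m \<Rightarrow> real^'d^'m \<Rightarrow> nat \<Rightarrow> (real^'d^'m) \<times> (real^'d^'m)" where
  "fastmix_seq W u 0 = (u, u)"
| "fastmix_seq W u (Suc k) =
     (let (prev, cur) = fastmix_seq W u k
      in (cur, (1 + eta_u W) *\<^sub>R (W ** cur) - eta_u W *\<^sub>R prev))"

definition FastMix :: "real^'m^'m \<Rightarrow> real^'d^'m \<Rightarrow> nat \<Rightarrow> real^'d^'m" where
  "FastMix W u K = snd (fastmix_seq W u K)"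

definition avg :: "real^'d^'m \<Rightarrow> real^'d" where
  "avg u = (1 / real CARD('m)) *\<^sub>R (\<Sum>i\<in>UNIV. u $ i)"

definition ones_row :: "real^'d \<Rightarrow> real^'d^'m" where
  "ones_row v = (\<chi> i. v)"

definition loc_f :: "('m \<Rightarrow> 'n::finite \<Rightarrow> real^'d \<Rightarrow> real) \<Rightarrow> 'm \<Rightarrow> real^'d \<Rightarrow> real" where
  "loc_f F i z = (1 / real CARD('n)) * (\<Sum>j\<in>UNIV. F i j z)"

definition glob_f :: "('m::finite \<Rightarrow> 'n::finite \<Rightarrow> real^'d \<Rightarrow> real) \<Rightarrow> real^'d \<Rightarrow> real" where
  "glob_f F z = (1 / real CARD('m)) * (\<Sum>i\<in>UNIV. loc_f F i z)"

definition stacked_grad :: "('m::finite \<Rightarrow> 'n::finite \<Rightarrow> real^'d \<Rightarrow> real) \<Rightarrow> real^'d^'m \<Rightarrow> real^'d^'m" where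
  "stacked_grad F x = (\<chi> i. grad (loc_f F i) (x $ i))"

text \<open>One realisation of DEAREST: state (x_t, g_t, s_t). The coin flips y_t and the sampled
  indices xi t i j (j < b) are arbitrary (the statement is pathwise).\<close>
fun dearest ::
  "real^'m^'m \<Rightarrow> ('m::finite \<Rightarrow> 'n::finite \<Rightarrow> real^'d \<Rightarrow> real) \<Rightarrow> real^'d \<Rightarrow> real \<Rightarrow> nat
    \<Rightarrow> nat \<Rightarrow> nat \<Rightarrow> nat \<Rightarrow> (nat \<Rightarrow> bool) \<Rightarrow> (nat \<Rightarrow> 'm \<Rightarrow> nat \<Rightarrow> 'n) \<Rightarrow> nat
    \<Rightarrow> (real^'d^'m) \<times> (real^'d^'m) \<times> (real^'d^'m)" where
  "dearest W F xbar0 eta b Kin K Khat y xi 0 =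
     (let x0 = ones_row xbar0; g0 = stacked_grad F x0 in (x0, g0, FastMix W g0 Kin))"
| "dearest W F xbar0 eta b Kin K Khat y xi (Suc t) =
     (let (x, g, s) = dearest W F xbar0 eta b Kin K Khat y xi t;
          Kt = (if y t then K else Khat);
          x' = FastMix W (x - eta *\<^sub>R s) Kt;
          g' = (\<chi> i. if y t then grad (loc_f F i) (x' $ i)
                     else g $ i + (1 / real b) *\<^sub>R
                       (\<Sum>j<b. grad (F i (xi t i j)) (x' $ i) - grad (F i (xi t i j)) (x $ i)));
          s' = FastMix W (s + g' - g) Kt
      in (x', g', s'))"

end

theory Submission
  imports Defs
begin

lemma gderiv_unique:
  assumes "GDERIV f x :> D" "GDERIV f x :> D'" shows "D = D'"
proof -
  have "(\<lambda>h. inner h D) = (\<lambda>h. inner h D')"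
    using has_derivative_unique assms unfolding gderiv_def by blast
  then have "inner (D - D') D = inner (D - D') D'" by meson
  then have "inner (D - D') (D - D') = 0" by (simp add: inner_diff_right)
  then show ?thesis by simp
qed

lemma grad_eq: "GDERIV f x :> D \<Longrightarrow> grad f x = D"
  unfolding grad_def using gderiv_unique by blast

lemma grad_works:
  fixes f :: "'v::euclidean_space \<Rightarrow> real"
  assumes "f differentiable (at x)" shows "GDERIV f x :> grad f x"
proof -
  obtain f' where d: "(f has_derivative f') (at x)" using assms unfolding differentiable_def by blast
  then have lin: "linear f'" using has_derivative_linear by blast
  have "f' = (\<lambda>h. inner h (adjoint f' 1))"
  proof
    fix h show "f' h = inner h (adjoint f' 1)" using adjoint_works[OF lin, of h 1] by simp
  qed
  then have "GDERIV f x :> adjoint f' 1" unfolding gderiv_def using d by simp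
  then show ?thesis using grad_eq by metis
qed

lemma norm_sum_sq_le:
  fixes v :: "'a \<Rightarrow> 'b::real_normed_vector"
  shows "(norm (\<Sum>i\<in>I. v i))\<^sup>2 \<le> real (card I) * (\<Sum>i\<in>I. (norm (v i))\<^sup>2)"
proof -
  have "(norm (\<Sum>i\<in>I. v i))\<^sup>2 \<le> (\<Sum>i\<in>I. 1 * norm (v i))\<^sup>2"
    by (simp add: norm_sum power_mono)
  also have "\<dots> \<le> (\<Sum>i\<in>I. 1\<^sup>2) * (\<Sum>i\<in>I. (norm (v i))\<^sup>2)"
    by (rule Cauchy_Schwarz_ineq_sum)
  finally show ?thesis by simp
qed

lemma norm_avg_sq_le:
  fixes v :: "'a \<Rightarrow> 'b::real_normed_vector"
  assumes "finite I" "I \<noteq> {}"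
  shows "(norm ((1 / real (card I)) *\<^sub>R (\<Sum>i\<in>I. v i)))\<^sup>2 \<le> (1 / real (card I)) * (\<Sum>i\<in>I. (norm (v i))\<^sup>2)"
proof -
  have c: "real (card I) > 0" using assms by (simp add: card_gt_0_iff)
  have "(norm ((1 / real (card I)) *\<^sub>R (\<Sum>i\<in>I. v i)))\<^sup>2 = (1 / real (card I))\<^sup>2 * (norm (\<Sum>i\<in>I. v i))\<^sup>2"
    by (simp add: power_divide)
  also have "\<dots> \<le> (1 / real (card I))\<^sup>2 * (real (card I) * (\<Sum>i\<in>I. (norm (v i))\<^sup>2))"
    by (rule mult_left_mono[OF norm_sum_sq_le]) simp
  also have "\<dots> = (1 / real (card I)) * (\<Sum>i\<in>I. (norm (v i))\<^sup>2)"
    using c by (simp add: power2_eq_square)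
  finally show ?thesis .
qed

lemma descent:
  fixes f :: "'v::real_inner \<Rightarrow> real"
  assumes G: "\<And>z. GDERIV f z :> G z"
    and Lip: "\<And>u w. norm (G u - G w) \<le> L * norm (u - w)"
  shows "f y \<le> f x + inner (G x) (y - x) + L / 2 * (norm (y - x))\<^sup>2"
proof -
  define v where "v = y - x"
  define h where "h s = f (x + s *\<^sub>R v) - s * inner v (G x) - L / 2 * s\<^sup>2 * (norm v)\<^sup>2" for s
  have dphi: "((\<lambda>s. f (x + s *\<^sub>R v)) has_real_derivative inner v (G (x + s *\<^sub>R v))) (at s)" for s
  proof -
    have d1: "((\<lambda>s. x + s *\<^sub>R v) has_derivative (\<lambda>h. h *\<^sub>R v)) (at s)"
      by (auto intro!: derivative_eq_intros)
    have "((\<lambda>s. f (x + s *\<^sub>R v)) has_derivative (\<lambda>h. inner (h *\<^sub>R v) (G (x + s *\<^sub>R v)))) (at s)"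
      using has_derivative_compose[OF d1 G[of "x + s *\<^sub>R v", unfolded gderiv_def]] by simp
    then show ?thesis unfolding has_field_derivative_def by (simp add: mult.commute[of _ "v \<bullet> _"])
  qed
  have dh: "(h has_real_derivative (inner v (G (x + s *\<^sub>R v)) - inner v (G x) - L * s * (norm v)\<^sup>2)) (at s)" for s
    unfolding h_def
    by (rule derivative_eq_intros dphi | simp)+
  have "h 1 \<le> h 0"
  proof (rule DERIV_nonpos_imp_nonincreasing[of 0 1 h])
    fix s :: real assume s: "0 \<le> s" "s \<le> 1"
    have "inner v (G (x + s *\<^sub>R v)) - inner v (G x) = inner v (G (x + s *\<^sub>R v) - G x)"
      by (simp add: inner_diff_right)
    also have "\<dots> \<le> norm v * norm (G (x + s *\<^sub>R v) - G x)"
      using Cauchy_Schwarz_ineq2 by (metis abs_le_D1)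
    also have "\<dots> \<le> norm v * (L * norm (s *\<^sub>R v))"
      using Lip[of "x + s *\<^sub>R v" x] by (simp add: mult_left_mono)
    also have "\<dots> = L * s * (norm v)\<^sup>2" using s by (simp add: power2_eq_square)
    finally show "\<exists>y. (h has_real_derivative y) (at s) \<and> y \<le> 0" using dh by fastforce
  qed simp
  then show ?thesis unfolding h_def v_def by (simp add: inner_commute)
qed


lemma gderiv_sum:
  assumes "finite I" "\<And>j. j \<in> I \<Longrightarrow> GDERIV (f j) x :> D j"
  shows "GDERIV (\<lambda>z. \<Sum>j\<in>I. f j z) x :> (\<Sum>j\<in>I. D j)"
  using assms unfolding gderiv_def
  by (auto intro!: derivative_eq_intros simp: inner_sum_right)

lemma gderiv_cmult:
  assumes "GDERIV f x :> D"
  shows "GDERIV (\<lambda>z. c * f z) x :> c *\<^sub>R D"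
  using assms unfolding gderiv_def
  by (auto intro!: derivative_eq_intros)

lemma loc_f_gderiv:
  fixes F :: "'m::finite \<Rightarrow> 'n::finite \<Rightarrow> real^'d \<Rightarrow> real"
  assumes diff: "\<And>i j x. F i j differentiable (at x)"
  shows "GDERIV (loc_f F i) z :> (1 / real CARD('n)) *\<^sub>R (\<Sum>j\<in>UNIV. grad (F i j) z)"
proof -
  have "GDERIV (\<lambda>z. \<Sum>j\<in>UNIV. F i j z) z :> (\<Sum>j\<in>UNIV. grad (F i j) z)"
    by (rule gderiv_sum) (auto intro: grad_works diff)
  from gderiv_cmult[OF this, of "1 / real CARD('n)"] show ?thesis unfolding loc_f_def[abs_def] .
qed

lemma glob_f_gderiv:
  fixes F :: "'m::finite \<Rightarrow> 'n::finite \<Rightarrow> real^'d \<Rightarrow> real"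
  assumes diff: "\<And>i j x. F i j differentiable (at x)"
  shows "GDERIV (glob_f F) z :> (1 / real CARD('m)) *\<^sub>R (\<Sum>i\<in>UNIV. grad (loc_f F i) z)"
proof -
  have "GDERIV (\<lambda>z. \<Sum>i\<in>UNIV. loc_f F i z) z :> (\<Sum>i\<in>UNIV. grad (loc_f F i) z)"
    by (rule gderiv_sum) (auto intro: grad_eq[symmetric] loc_f_gderiv diff simp: grad_eq[OF loc_f_gderiv[OF diff]])
  from gderiv_cmult[OF this, of "1 / real CARD('m)"] show ?thesis unfolding glob_f_def[abs_def] .
qed

lemma loc_f_smooth:
  fixes F :: "'m::finite \<Rightarrow> 'n::finite \<Rightarrow> real^'d \<Rightarrow> real"
  assumes diff: "\<And>i j x. F i j differentiable (at x)"
    and smooth: "\<And>i x x'. (1 / real CARD('n)) *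
        (\<Sum>j\<in>UNIV. (norm (grad (F i j) x - grad (F i j) x'))\<^sup>2) \<le> L\<^sup>2 * (norm (x - x'))\<^sup>2"
  shows "(norm (grad (loc_f F i) x - grad (loc_f F i) x'))\<^sup>2 \<le> L\<^sup>2 * (norm (x - x'))\<^sup>2"
proof -
  have "grad (loc_f F i) x - grad (loc_f F i) x' = (1 / real (card (UNIV::'n set))) *\<^sub>R (\<Sum>j\<in>UNIV. grad (F i j) x - grad (F i j) x')"
    by (simp add: grad_eq[OF loc_f_gderiv[OF diff]] sum_subtractf scaleR_diff_right)
  then have "(norm (grad (loc_f F i) x - grad (loc_f F i) x'))\<^sup>2 \<le> (1 / real CARD('n)) * (\<Sum>j\<in>UNIV. (norm (grad (F i j) x - grad (F i j) x'))\<^sup>2)"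
    using norm_avg_sq_le[of "UNIV::'n set" "\<lambda>j. grad (F i j) x - grad (F i j) x'"] by simp
  also have "\<dots> \<le> L\<^sup>2 * (norm (x - x'))\<^sup>2" by (rule smooth)
  finally show ?thesis .
qed

lemma glob_f_smooth:
  fixes F :: "'m::finite \<Rightarrow> 'n::finite \<Rightarrow> real^'d \<Rightarrow> real"
  assumes diff: "\<And>i j x. F i j differentiable (at x)"
    and smooth: "\<And>i x x'. (1 / real CARD('n)) *
        (\<Sum>j\<in>UNIV. (norm (grad (F i j) x - grad (F i j) x'))\<^sup>2) \<le> L\<^sup>2 * (norm (x - x'))\<^sup>2"
    and L: "L > 0"
  shows "norm (grad (glob_f F) x - grad (glob_f F) x') \<le> L * norm (x - x')"
proof -
  have "grad (glob_f F) x - grad (glob_f F) x' = (1 / real (card (UNIV::'m set))) *\<^sub>R (\<Sum>i\<in>UNIV. grad (loc_f F i) x - grad (loc_f F i) x')"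
    by (simp add: grad_eq[OF glob_f_gderiv[OF diff]] sum_subtractf scaleR_diff_right)
  then have "(norm (grad (glob_f F) x - grad (glob_f F) x'))\<^sup>2 \<le> (1 / real CARD('m)) * (\<Sum>i\<in>UNIV. (norm (grad (loc_f F i) x - grad (loc_f F i) x'))\<^sup>2)"
    using norm_avg_sq_le[of "UNIV::'m set" "\<lambda>i. grad (loc_f F i) x - grad (loc_f F i) x'"] by simp
  also have "\<dots> \<le> (1 / real CARD('m)) * (\<Sum>i\<in>(UNIV::'m set). L\<^sup>2 * (norm (x - x'))\<^sup>2)"
    by (intro mult_left_mono sum_mono loc_f_smooth[OF diff smooth]) auto
  also have "\<dots> = (L * norm (x - x'))\<^sup>2" by (simp add: power_mult_distrib)
  finally show ?thesis using L by (simp add: power_mono_iff[symmetric])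
qed


lemma avg_add: "avg (u + v) = avg u + avg v"
  unfolding avg_def by (simp add: sum.distrib scaleR_add_right)
lemma avg_diff: "avg (u - v) = avg u - avg v"
  unfolding avg_def by (simp add: sum_subtractf scaleR_diff_right)
lemma avg_scaleR: "avg (c *\<^sub>R u) = c *\<^sub>R avg u"
  unfolding avg_def by (simp add: scaleR_sum_right[symmetric])

lemma avg_W:
  fixes W :: "real^'m::finite^'m" and u :: "real^'d^'m"
  assumes W_sym: "transpose W = W"
    and W_stoch: "W *v (\<chi> i. 1) = (\<chi> i. 1)"
  shows "avg (W ** u) = avg u"
proof -
  have col: "(\<Sum>i\<in>UNIV. W $ i $ k) = 1" for k
  proof -
    have "(W *v (\<chi> i. 1)) $ k = 1" using W_stoch by simp
    then have "(\<Sum>i\<in>UNIV. W $ k $ i) = 1" by (simp add: matrix_vector_mult_def)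
    moreover have "W $ k $ i = W $ i $ k" for i
      using arg_cong[OF W_sym, of "\<lambda>M. M $ i $ k"] by (simp add: transpose_def)
    ultimately show ?thesis by simp
  qed
  have "(\<Sum>i\<in>UNIV. (W ** u) $ i) = (\<Sum>i\<in>UNIV. u $ i)"
  proof (rule vec_eq_iff[THEN iffD2], rule allI)
    fix j
    have "(\<Sum>i\<in>UNIV. (W ** u) $ i) $ j = (\<Sum>i\<in>UNIV. \<Sum>k\<in>UNIV. W $ i $ k * u $ k $ j)"
      by (simp add: matrix_matrix_mult_def sum_component)
    also have "\<dots> = (\<Sum>k\<in>UNIV. (\<Sum>i\<in>UNIV. W $ i $ k) * u $ k $ j)"
      by (subst sum.swap) (simp add: sum_distrib_right)
    also have "\<dots> = (\<Sum>i\<in>UNIV. u $ i) $ j" by (simp add: col sum_component)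
    finally show "(\<Sum>i\<in>UNIV. (W ** u) $ i) $ j = (\<Sum>i\<in>UNIV. u $ i) $ j" .
  qed
  then show ?thesis unfolding avg_def by simp
qed

lemma avg_fastmix_seq:
  fixes W :: "real^'m::finite^'m" and u :: "real^'d^'m"
  assumes W_sym: "transpose W = W"
    and W_stoch: "W *v (\<chi> i. 1) = (\<chi> i. 1)"
  shows "avg (fst (fastmix_seq W u k)) = avg u \<and> avg (snd (fastmix_seq W u k)) = avg u"
proof (induction k)
  case 0 then show ?case by simp
next
  case (Suc k)
  obtain p c where pc: "fastmix_seq W u k = (p, c)" by fastforce
  show ?case using Suc pc
    by (simp add: avg_diff avg_scaleR avg_W[OF W_sym W_stoch] algebra_simps avg_add)
qed

lemma avg_FastMix:
  fixes W :: "real^'m::finite^'m" and u :: "real^'d^'m"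
  assumes W_sym: "transpose W = W"
    and W_stoch: "W *v (\<chi> i. 1) = (\<chi> i. 1)"
  shows "avg (FastMix W u k) = avg u"
  unfolding FastMix_def using avg_fastmix_seq[OF assms] by blast

lemma dearest_avg:
  fixes W :: "real^'m::finite^'m"
  assumes W_sym: "transpose W = W"
    and W_stoch: "W *v (\<chi> i. 1) = (\<chi> i. 1)"
  shows "avg (snd (snd (dearest W F xbar0 eta b Kin K Khat y xi t))) = avg (fst (snd (dearest W F xbar0 eta b Kin K Khat y xi t)))
     \<and> avg (fst (dearest W F xbar0 eta b Kin K Khat y xi (Suc t))) = avg (fst (dearest W F xbar0 eta b Kin K Khat y xi t)) - eta *\<^sub>R avg (snd (snd (dearest W F xbar0 eta b Kin K Khat y xi t)))"
proof (induction t)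
  case 0 then show ?case
    by (simp add: Let_def avg_FastMix[OF W_sym W_stoch] avg_diff avg_scaleR)
next
  case (Suc t)
  obtain x g s where st: "dearest W F xbar0 eta b Kin K Khat y xi t = (x, g, s)" by (metis prod_cases3)
  show ?case using Suc st
    by (simp add: Let_def avg_FastMix[OF W_sym W_stoch] avg_diff avg_add avg_scaleR)
qed


lemma norm_vec_sq: "(norm (v :: ('a::real_normed_vector)^'k::finite))\<^sup>2 = (\<Sum>i\<in>UNIV. (norm (v $ i))\<^sup>2)"
  unfolding norm_vec_def L2_set_def by (simp add: sum_nonneg)

lemma sq_sum_le: "(norm (a + b))\<^sup>2 \<le> 2 * (norm a)\<^sup>2 + 2 * (norm (b::'a::real_normed_vector))\<^sup>2"
proof -
  have "(norm (a + b))\<^sup>2 \<le> (norm a + norm b)\<^sup>2" by (simp add: norm_triangle_ineq power_mono)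
  also have "\<dots> \<le> 2 * (norm a)\<^sup>2 + 2 * (norm b)\<^sup>2"
  proof -
    have "0 \<le> (norm a - norm b)\<^sup>2" by simp
    then show ?thesis unfolding power2_diff power2_sum by linarith
  qed
  finally show ?thesis .
qed

theorem lemma5:
  fixes F :: "'m::finite \<Rightarrow> 'n::finite \<Rightarrow> real^'d \<Rightarrow> real"
    and W :: "real^'m^'m"
    and E :: "'m \<Rightarrow> 'm \<Rightarrow> bool"
    and L eta p :: real
    and xbar0 :: "real^'d"
    and b Kin K Khat t :: nat
    and y :: "nat \<Rightarrow> bool"
    and xi :: "nat \<Rightarrow> 'm \<Rightarrow> nat \<Rightarrow> 'n"
  assumes diff: "\<And>i j x. F i j differentiable (at x)"
    and L_pos: "L > 0"
    and smooth: "\<And>i x x'. (1 / real CARD('n)) *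
        (\<Sum>j\<in>UNIV. (norm (grad (F i j) x - grad (F i j) x'))\<^sup>2) \<le> L\<^sup>2 * (norm (x - x'))\<^sup>2"
    and W_sym: "transpose W = W"
    and W_graph: "\<And>i j. \<not> E i j \<Longrightarrow> W $ i $ j = 0"
    and W_stoch: "W *v (\<chi> i. 1) = (\<chi> i. 1)"
    and eta_pos: "eta > 0"
  defines "st \<equiv> dearest W F xbar0 eta b Kin K Khat y xi"
  shows "let (x, g, s) = st t; (x', g', s') = st (Suc t); m = real CARD('m);
             U = (norm ((1 / m) *\<^sub>R (\<Sum>i\<in>UNIV. g $ i - grad (loc_f F i) (x $ i))))\<^sup>2;
             C = (norm (x - ones_row (avg x)))\<^sup>2 + eta\<^sup>2 * (norm (s - ones_row (avg s)))\<^sup>2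
         in glob_f F (avg x') \<le> glob_f F (avg x) - eta / 2 * (norm (grad (glob_f F) (avg x)))\<^sup>2
              + eta * U + L\<^sup>2 * eta / m * C
              - (1 / (2 * eta) - L / 2) * (norm (avg x' - avg x))\<^sup>2"
  
proof -
  obtain x g s where st0: "st t = (x, g, s)" by (metis prod_cases3)
  obtain x' g' s' where st1: "st (Suc t) = (x', g', s')" by (metis prod_cases3)
  define m where "m = real CARD('m)"
  have m_pos: "m > 0" unfolding m_def by simp
  define X where "X = avg x"
  define gb where "gb = avg g"
  define G where "G = grad (glob_f F)"
  define U where "U = (norm ((1 / m) *\<^sub>R (\<Sum>i\<in>UNIV. g $ i - grad (loc_f F i) (x $ i))))\<^sup>2"
  define C where "C = (norm (x - ones_row (avg x)))\<^sup>2 + eta\<^sup>2 * (norm (s - ones_row (avg s)))\<^sup>2"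
  have inv: "avg s = avg g" "avg x' = avg x - eta *\<^sub>R avg s"
    using dearest_avg[OF W_sym W_stoch, of F xbar0 eta b Kin K Khat y xi t, folded st_def]
    unfolding st0 st1 by auto
  have X': "avg x' - X = - eta *\<^sub>R gb" using inv unfolding X_def gb_def by simp
  have Gd: "GDERIV (glob_f F) z :> G z" for z
    unfolding G_def grad_eq[OF glob_f_gderiv[OF diff, where z=z]] by (rule glob_f_gderiv[OF diff])
  have GL: "norm (G u - G w) \<le> L * norm (u - w)" for u w
    unfolding G_def by (rule glob_f_smooth[OF diff smooth L_pos])
  have desc: "glob_f F (avg x') \<le> glob_f F X + inner (G X) (avg x' - X) + L / 2 * (norm (avg x' - X))\<^sup>2"
    by (rule descent[of "glob_f F" G L, OF Gd GL])
  have ident: "inner (G X) (avg x' - X) = - eta / 2 * (norm (G X))\<^sup>2 - 1 / (2 * eta) * (norm (avg x' - X))\<^sup>2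
      + eta / 2 * (norm (G X - gb))\<^sup>2"
    using eta_pos unfolding X' power2_norm_eq_inner
    by (simp add: inner_diff_left inner_diff_right inner_commute field_simps power2_eq_square)
  define A where "A = (1 / m) *\<^sub>R (\<Sum>i\<in>UNIV. grad (loc_f F i) X - grad (loc_f F i) (x $ i))"
  define B where "B = (1 / m) *\<^sub>R (\<Sum>i\<in>UNIV. grad (loc_f F i) (x $ i) - g $ i)"
  have GX: "G X = (1 / m) *\<^sub>R (\<Sum>i\<in>UNIV. grad (loc_f F i) X)"
    unfolding G_def m_def by (rule grad_eq[OF glob_f_gderiv[OF diff]])
  have "G X - gb = A + B"
    unfolding GX A_def B_def gb_def avg_def m_def
    by (simp add: sum_subtractf scaleR_diff_right)
  have U: "U = (norm B)\<^sup>2"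
  proof -
    have "B = - ((1 / m) *\<^sub>R (\<Sum>i\<in>UNIV. g $ i - grad (loc_f F i) (x $ i)))"
      unfolding B_def by (simp add: sum_subtractf scaleR_diff_right)
    then show ?thesis unfolding U_def by simp
  qed
  have "(norm A)\<^sup>2 \<le> (1 / m) * (\<Sum>i\<in>UNIV. (norm (grad (loc_f F i) X - grad (loc_f F i) (x $ i)))\<^sup>2)"
    unfolding A_def m_def using norm_avg_sq_le[of "UNIV::'m set" "\<lambda>i. grad (loc_f F i) X - grad (loc_f F i) (x $ i)"] by simp
  also have "\<dots> \<le> (1 / m) * (\<Sum>i\<in>UNIV. L\<^sup>2 * (norm (x $ i - X))\<^sup>2)"
    using m_pos by (intro mult_left_mono sum_mono) (auto simp: loc_f_smooth[OF diff smooth] norm_minus_commute)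
  also have "\<dots> = L\<^sup>2 / m * (norm (x - ones_row X))\<^sup>2"
    by (simp add: norm_vec_sq ones_row_def sum_distrib_left)
  finally have A: "(norm A)\<^sup>2 \<le> L\<^sup>2 / m * (norm (x - ones_row X))\<^sup>2" .
  have Cge: "(norm (x - ones_row X))\<^sup>2 \<le> C" unfolding C_def X_def by simp
  have "eta / 2 * (norm (G X - gb))\<^sup>2 \<le> eta / 2 * (2 * (norm A)\<^sup>2 + 2 * (norm B)\<^sup>2)"
    using eta_pos \<open>G X - gb = A + B\<close> sq_sum_le[of A B] by (intro mult_left_mono) auto
  also have "\<dots> = eta * (norm A)\<^sup>2 + eta * U" unfolding U by (simp add: algebra_simps)
  also have "\<dots> \<le> eta * (L\<^sup>2 / m * C) + eta * U"
    using eta_pos A Cge m_pos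
    by (intro add_right_mono mult_left_mono order_trans[OF A]) auto
  finally have err: "eta / 2 * (norm (G X - gb))\<^sup>2 \<le> eta * U + L\<^sup>2 * eta / m * C" by (simp add: algebra_simps)
  have main: "glob_f F (avg x') \<le> glob_f F X - eta / 2 * (norm (G X))\<^sup>2 + eta * U + L\<^sup>2 * eta / m * C
      - (1 / (2 * eta) - L / 2) * (norm (avg x' - X))\<^sup>2"
  proof -
    have "glob_f F (avg x') \<le> glob_f F X + (- eta / 2 * (norm (G X))\<^sup>2 - 1 / (2 * eta) * (norm (avg x' - X))\<^sup>2
      + eta / 2 * (norm (G X - gb))\<^sup>2) + L / 2 * (norm (avg x' - X))\<^sup>2"
      using desc unfolding ident .
    also have "\<dots> \<le> glob_f F X + (- eta / 2 * (norm (G X))\<^sup>2 - 1 / (2 * eta) * (norm (avg x' - X))\<^sup>2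
      + (eta * U + L\<^sup>2 * eta / m * C)) + L / 2 * (norm (avg x' - X))\<^sup>2"
      using err by linarith
    also have "\<dots> = glob_f F X - eta / 2 * (norm (G X))\<^sup>2 + eta * U + L\<^sup>2 * eta / m * C
      - (1 / (2 * eta) - L / 2) * (norm (avg x' - X))\<^sup>2"
      by (simp add: algebra_simps)
    finally show ?thesis .
  qed
  show ?thesis
    using main unfolding st0 st1 Let_def U_def C_def m_def X_def G_def by simp
qed

end
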